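(* Let $Z=Z(P)$ be a fake weighted projective plane, with $\operatorname{Cl}(Z)\cong\mathbb{Z}\times\mathbb{Z}/n\mathbb{Z}$ and $w_0,w_1,w_2$ as in the context. Then there exists an integer $0\le x<nw_2$ with $\gcd(x,nw_2)=1$ such that $Z(P)\cong Z(P')$, where \[ P'=\begin{bmatrix}1 & x & -\frac{w_0+xw_1}{w_2}\\ 0 & nw_2 & -nw_1\end{bmatrix}. \]
   Context: Ground field algebraically closed of characteristic zero. For an integral $2\times3$ matrix $P=[v_0\ v_1\ v_2]$ with primitive columns generating $\mathbb{Q}^2$ as a convex cone, $Z(P)$ denotes the toric surface of the unique complete fan in $\mathbb{Z}^2$ with rays through $v_0,v_1,v_2$ (a fake weighted projective plane). Under a splitting $\operatorname{Cl}(Z)\cong\mathbb{Z}\times\mathbb{Z}/n\mathbb{Z}$, write $[D_i]=(w_i,\eta_i)$ for the invariant prime divisor $D_i$ of $v_i$, with the splitting chosen so that $w_i>0$. *)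

theory Defs
  imports Main "HOL.Rat"
begin

text \<open>An integral 2x3 matrix P is represented by its columns P 0, P 1, P 2 :: int \<times> int
  (values at indices \<ge> 3 are irrelevant).\<close>

definition primitive_vec :: "int \<times> int \<Rightarrow> bool" where
  "primitive_vec v \<longleftrightarrow> gcd (fst v) (snd v) = 1"

definition cone_generates_Q2 :: "(nat \<Rightarrow> int \<times> int) \<Rightarrow> bool" where
  "cone_generates_Q2 P \<longleftrightarrow>
     (\<forall>x y :: rat. \<exists>c :: nat \<Rightarrow> rat. (\<forall>i<3. c i \<ge> 0) \<and>
        x = (\<Sum>i<3. c i * of_int (fst (P i))) \<and>
        y = (\<Sum>i<3. c i * of_int (snd (P i))))"

definition fwpp_matrix :: "(nat \<Rightarrow> int \<times> int) \<Rightarrow> bool" where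
  "fwpp_matrix P \<longleftrightarrow> (\<forall>i<3. primitive_vec (P i)) \<and> cone_generates_Q2 P"

definition pair_int :: "int \<times> int \<Rightarrow> int \<times> int \<Rightarrow> int" where
  "pair_int u v = fst u * fst v + snd u * snd v"

text \<open>Principal invariant divisor div(chi^u) = sum_i <u,v_i> D_i, as an element of Z^3.\<close>
definition princ_div :: "(nat \<Rightarrow> int \<times> int) \<Rightarrow> int \<times> int \<Rightarrow> int \<times> int \<times> int" where
  "princ_div P u = (pair_int u (P 0), pair_int u (P 1), pair_int u (P 2))"

text \<open>The map Z^3 = WDiv^T(Z) -> Z x Z/nZ sending D_i to (w_i, eta_i mod n);
  Z/nZ is represented by the residues {0..<n}.\<close>
definition cl_class :: "(nat \<Rightarrow> int) \<Rightarrow> (nat \<Rightarrow> int) \<Rightarrow> int \<Rightarrow> int \<times> int \<times> int \<Rightarrow> int \<times> int" where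
  "cl_class w \<eta> n a = (case a of (a0, a1, a2) \<Rightarrow>
      (a0 * w 0 + a1 * w 1 + a2 * w 2, (a0 * \<eta> 0 + a1 * \<eta> 1 + a2 * \<eta> 2) mod n))"

text \<open>A splitting Cl(Z(P)) = Z^3 / principal divisors \<cong> Z x Z/nZ with [D_i] = (w_i, eta_i):
  the induced map is surjective with kernel exactly the principal divisors.\<close>
definition cl_splitting :: "(nat \<Rightarrow> int \<times> int) \<Rightarrow> int \<Rightarrow> (nat \<Rightarrow> int) \<Rightarrow> (nat \<Rightarrow> int) \<Rightarrow> bool" where
  "cl_splitting P n w \<eta> \<longleftrightarrow> n \<ge> 1 \<and>
     range (cl_class w \<eta> n) = UNIV \<times> {0..<n} \<and>
     {a. cl_class w \<eta> n a = (0, 0)} = range (princ_div P)"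

definition lin2 :: "int \<times> int \<times> int \<times> int \<Rightarrow> int \<times> int \<Rightarrow> int \<times> int" where
  "lin2 A v = (case A of (a, b, c, d) \<Rightarrow> (a * fst v + b * snd v, c * fst v + d * snd v))"

text \<open>Z(P) \<cong> Z(Q): a lattice automorphism A in GL(2,Z) mapping the rays (columns) of P
  bijectively onto the rays of Q, i.e. an isomorphism of the fans.\<close>
definition toric_iso :: "(nat \<Rightarrow> int \<times> int) \<Rightarrow> (nat \<Rightarrow> int \<times> int) \<Rightarrow> bool" where
  "toric_iso P Q \<longleftrightarrow> (\<exists>a b c d. (a * d - b * c = 1 \<or> a * d - b * c = -1) \<and>
     (\<exists>\<sigma>. bij_betw \<sigma> {0..<3} {0..<3} \<and> (\<forall>i<3. lin2 (a, b, c, d) (P i) = Q (\<sigma> i))))"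

definition normal_form_matrix :: "int \<Rightarrow> int \<Rightarrow> int \<Rightarrow> int \<Rightarrow> int \<Rightarrow> nat \<Rightarrow> int \<times> int" where
  "normal_form_matrix n w0 w1 w2 x = (\<lambda>i. if i = 0 then (1, 0)
      else if i = 1 then (x, n * w2)
      else (- ((w0 + x * w1) div w2), - n * w1))"

end

theory Submission
  imports Defs
begin

lemma princ_ker:
  assumes "cl_splitting P n w \<eta>"
  shows "cl_class w \<eta> n (princ_div P u) = (0, 0)"
  using assms unfolding cl_splitting_def by blast

lemma princ_ker_eqs:
  assumes "cl_splitting P n w \<eta>"
  shows "pair_int u (P 0) * w 0 + pair_int u (P 1) * w 1 + pair_int u (P 2) * w 2 = 0"
    and "(pair_int u (P 0) * \<eta> 0 + pair_int u (P 1) * \<eta> 1 + pair_int u (P 2) * \<eta> 2) mod n = 0"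
  using princ_ker[OF assms, of u] by (simp_all add: princ_div_def cl_class_def)

lemma rel_w:
  assumes "cl_splitting P n w \<eta>"
  shows "w 0 * fst (P 0) + w 1 * fst (P 1) + w 2 * fst (P 2) = 0"
    and "w 0 * snd (P 0) + w 1 * snd (P 1) + w 2 * snd (P 2) = 0"
  using princ_ker_eqs(1)[OF assms, of "(1,0)"] princ_ker_eqs(1)[OF assms, of "(0,1)"]
  by (simp_all add: pair_int_def algebra_simps)

lemma D_dvd:
  assumes "cl_splitting P n w \<eta>" and "gcd (fst (P 0)) (snd (P 0)) = 1"
  shows "(fst (P 0) * snd (P 1) - snd (P 0) * fst (P 1)) dvd (n * w 2)"
proof -
  let ?N = "n * w 2"
  have "cl_class w \<eta> n (0, ?N, - n * w 1) = (0,0)"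
    by (simp add: cl_class_def algebra_simps)
  hence "(0, ?N, - n * w 1) \<in> range (princ_div P)"
    using assms(1) unfolding cl_splitting_def by blast
  then obtain u where u: "princ_div P u = (0, ?N, - n * w 1)" by auto
  obtain a b c d where ab: "P 0 = (a,b)" and cd: "P (Suc 0) = (c,d)" by (metis prod.exhaust)
  obtain u1 u2 where uu: "u = (u1,u2)" by (metis prod.exhaust)
  have e1: "u1 * a + u2 * b = 0" and e2: "u1 * c + u2 * d = ?N"
    using u by (simp_all add: princ_div_def pair_int_def ab cd uu)
  have "u2 * (a*d - b*c) = ?N * a"
  proof -
    have "u2 * (a*d - b*c) = a * (u1 * c + u2 * d) - c * (u1 * a + u2 * b)" by (simp add: algebra_simps)
    also have "\<dots> = ?N * a" using e1 e2 by simp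
    finally show ?thesis .
  qed
  hence h1: "(a*d - b*c) dvd ?N * a" by (metis dvd_triv_right)
  have "u1 * (a*d - b*c) = - ?N * b"
  proof -
    have "u1 * (a*d - b*c) = d * (u1 * a + u2 * b) - b * (u1 * c + u2 * d)" by (simp add: algebra_simps)
    also have "\<dots> = - ?N * b" using e1 e2 by simp
    finally show ?thesis .
  qed
  hence h2: "(a*d - b*c) dvd ?N * b" by (metis dvd_triv_right dvd_minus_iff mult_minus_left)
  have "(a*d - b*c) dvd gcd (?N * a) (?N * b)" using h1 h2 by simp
  also have "gcd (?N * a) (?N * b) = \<bar>?N\<bar>" using assms(2) ab
    by (simp add: gcd_mult_distrib_int[symmetric])
  finally show ?thesis using ab cd by simp
qed

lemma N_le:
  assumes sp: "cl_splitting P n w \<eta>" and g: "gcd (fst (P 0)) (snd (P 0)) = 1" and w2: "w 2 > 0"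
  shows "n * w 2 \<le> \<bar>fst (P 0) * snd (P 1) - snd (P 0) * fst (P 1)\<bar>"
proof -
  obtain a b c d where ab: "P 0 = (a,b)" and cd: "P (Suc 0) = (c,d)" by (metis prod.exhaust)
  obtain e f2 where ef: "P 2 = (e,f2)" by (metis prod.exhaust)
  define D where "D = a*d - b*c"
  have n1: "n \<ge> 1" using sp unfolding cl_splitting_def by simp
  have Nd: "D dvd n * w 2" using D_dvd[OF sp g] ab cd by (simp add: D_def)
  have Npos: "n * w 2 > 0" using n1 w2 by simp
  have D0: "D \<noteq> 0" using Nd Npos by auto
  define E where "E = \<bar>D\<bar>"
  define \<epsilon> where "\<epsilon> = sgn D"
  have epsD: "\<epsilon> * D = E" unfolding E_def \<epsilon>_def by (simp add: abs_sgn)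
  have Epos: "E > 0" using D0 E_def by simp
  obtain s t where st: "s * a + t * b = 1" using bezout_int[of a b] g ab by auto
  define x0 where "x0 = s*c + t*d"
  define f where "f = (\<lambda>j::int. (j * w 1 mod w 2, (j * \<eta> 1 - (j * w 1 div w 2) * \<eta> 2) mod n))"
  have sub: "{0..<w 2} \<times> {0..<n} \<subseteq> f ` {0..<E}"
  proof
    fix z assume z: "z \<in> {0..<w 2} \<times> {0..<n}"
    obtain m t' where mt: "z = (m, t')" by (metis prod.exhaust)
    have mr: "0 \<le> m" "m < w 2" "0 \<le> t'" "t' < n" using z mt by auto
    have "(m,t') \<in> range (cl_class w \<eta> n)" using sp mr unfolding cl_splitting_def by auto
    then obtain A where A: "cl_class w \<eta> n A = (m,t')" by auto
    obtain A0 A1 A2 where AA: "A = (A0,A1,A2)" by (metis prod.exhaust)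
    have A1e: "A0 * w 0 + A1 * w 1 + A2 * w 2 = m"
      and A2e: "(A0 * \<eta> 0 + A1 * \<eta> 1 + A2 * \<eta> 2) mod n = t'"
      using A AA by (simp_all add: cl_class_def)
    define r where "r = A1 - A0 * x0"
    define k where "k = r div E"
    define j where "j = r mod E"
    have rkj: "r = k * E + j" unfolding k_def j_def by simp
    have jr: "0 \<le> j" "j < E" unfolding j_def using Epos by auto
    define u where "u = (A0*s - k*\<epsilon>*b, A0*t + k*\<epsilon>*a)"
    have p0: "pair_int u (P 0) = A0"
    proof -
      have "pair_int u (P 0) = A0 * (s*a + t*b)" unfolding u_def pair_int_def ab by (simp add: algebra_simps)
      thus ?thesis using st by simp
    qed
    have p1: "pair_int u (P 1) = A0 * x0 + k * E"
    proof -
      have "pair_int u (P 1) = A0 * x0 + k * (\<epsilon> * D)" unfolding u_def pair_int_def using cd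
        by (simp add: algebra_simps x0_def D_def)
      thus ?thesis using epsD by simp
    qed
    define p2 where "p2 = pair_int u (P 2)"
    define c2 where "c2 = A2 - p2"
    have K1: "A0 * w 0 + (A0 * x0 + k * E) * w 1 + p2 * w 2 = 0"
      using princ_ker_eqs(1)[OF sp, of u] p0 p1 p2_def by simp
    have K2: "(A0 * \<eta> 0 + (A0 * x0 + k * E) * \<eta> 1 + p2 * \<eta> 2) mod n = 0"
      using princ_ker_eqs(2)[OF sp, of u] p0 p1 p2_def by simp
    have jm: "j * w 1 + c2 * w 2 = m"
    proof -
      have "j * w 1 + c2 * w 2 = (A0 * w 0 + A1 * w 1 + A2 * w 2) - (A0 * w 0 + (A0 * x0 + k * E) * w 1 + p2 * w 2)"
        using rkj unfolding r_def c2_def by (simp add: algebra_simps)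
      thus ?thesis using A1e K1 by simp
    qed
    have jt: "(j * \<eta> 1 + c2 * \<eta> 2) mod n = t'"
    proof -
      have "j * \<eta> 1 + c2 * \<eta> 2 = (A0 * \<eta> 0 + A1 * \<eta> 1 + A2 * \<eta> 2) - (A0 * \<eta> 0 + (A0 * x0 + k * E) * \<eta> 1 + p2 * \<eta> 2)"
        using rkj unfolding r_def c2_def by (simp add: algebra_simps)
      hence "(j * \<eta> 1 + c2 * \<eta> 2) mod n = (t' - 0) mod n"
        using A2e K2 by (metis mod_diff_eq)
      thus ?thesis using mr by simp
    qed
    have jw: "j * w 1 = m + w 2 * (- c2)" using jm by (simp add: algebra_simps)
    have dv0: "(m + w 2 * (- c2)) div w 2 = - c2 + m div w 2"
      using w2 div_mult_self2[of "w 2" m "- c2"] by linarith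
    have "m div w 2 = 0" using mr by simp
    hence dv: "j * w 1 div w 2 = - c2" unfolding jw using dv0 by simp
    have md: "j * w 1 mod w 2 = m" unfolding jw using mr w2 mod_mult_self2[of m "w 2" "- c2"]
      by (metis mod_pos_pos_trivial)
    have "f j = (m, t')" unfolding f_def using dv md jt by simp
    thus "z \<in> f ` {0..<E}" using jr mt by force
  qed
  have "card ({0..<w 2} \<times> {0..<n}) \<le> card (f ` {0..<E})"
    by (rule card_mono[OF _ sub]) simp
  also have "\<dots> \<le> card {0..<E}" by (rule card_image_le) simp
  finally have "nat (w 2) * nat n \<le> nat E" by simp
  hence "nat (n * w 2) \<le> nat E" using n1 w2 by (simp add: nat_mult_distrib mult.commute)
  hence "n * w 2 \<le> E" using Epos by simp
  thus ?thesis unfolding E_def D_def using ab cd by simp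
qed

theorem proposition8p3:
  fixes P :: "nat \<Rightarrow> int \<times> int" and n :: int and w \<eta> :: "nat \<Rightarrow> int"
  assumes "fwpp_matrix P"
    and "cl_splitting P n w \<eta>"
    and "\<forall>i<3. w i > 0"
  shows "\<exists>x :: int. 0 \<le> x \<and> x < n * w 2 \<and> gcd x (n * w 2) = 1 \<and>
           w 2 dvd (w 0 + x * w 1) \<and>
           toric_iso P (normal_form_matrix n (w 0) (w 1) (w 2) x)"
proof -
  note sp = assms(2)
  have g0: "gcd (fst (P 0)) (snd (P 0)) = 1" and g1: "gcd (fst (P 1)) (snd (P 1)) = 1"
    using assms(1) unfolding fwpp_matrix_def primitive_vec_def by auto
  have w2: "w 2 > 0" using assms(3) by simp
  obtain a b c d where ab: "P 0 = (a,b)" and cd: "P (Suc 0) = (c,d)" by (metis prod.exhaust)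
  obtain e f2 where ef: "P 2 = (e,f2)" by (metis prod.exhaust)
  define N where "N = n * w 2"
  define D where "D = a*d - b*c"
  have n1: "n \<ge> 1" using sp unfolding cl_splitting_def by simp
  have Npos: "N > 0" using n1 w2 N_def by simp
  have Nd: "D dvd N" using D_dvd[OF sp g0] ab cd by (simp add: D_def N_def)
  have Nle: "N \<le> \<bar>D\<bar>" using N_le[OF sp g0 w2] ab cd by (simp add: D_def N_def)
  have D0: "D \<noteq> 0" using Nd Npos by auto
  have "\<bar>D\<bar> \<le> N" using dvd_imp_le_int[of N D] Nd Npos by simp
  hence absD: "\<bar>D\<bar> = N" using Nle by simp
  define \<epsilon> where "\<epsilon> = sgn D"
  have epsD: "\<epsilon> * D = N" unfolding \<epsilon>_def using absD by (simp add: abs_sgn mult.commute)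
  have ee: "\<epsilon> * \<epsilon> = 1" unfolding \<epsilon>_def using D0 by (cases "D > 0") (auto simp: sgn_if)
  obtain s t where st: "s * a + t * b = 1" using bezout_int[of a b] g0 ab by auto
  define x0 where "x0 = s*c + t*d"
  define x where "x = x0 mod N"
  define kk where "kk = x0 div N"
  have x0e: "x0 = kk * N + x" unfolding x_def kk_def by simp
  define \<alpha> where "\<alpha> = s + kk*\<epsilon>*b"
  define \<beta> where "\<beta> = t - kk*\<epsilon>*a"
  define \<gamma> where "\<gamma> = - \<epsilon> * b"
  define \<delta> where "\<delta> = \<epsilon> * a"
  have det: "\<alpha> * \<delta> - \<beta> * \<gamma> = \<epsilon>"
  proof -
    have "\<alpha> * \<delta> - \<beta> * \<gamma> = \<epsilon> * (s*a + t*b)" unfolding \<alpha>_def \<beta>_def \<gamma>_def \<delta>_def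
      by (simp add: algebra_simps)
    thus ?thesis using st by simp
  qed
  have detpm: "\<alpha> * \<delta> - \<beta> * \<gamma> = 1 \<or> \<alpha> * \<delta> - \<beta> * \<gamma> = -1"
    unfolding det \<epsilon>_def using D0 by (simp add: sgn_if)
  have r0: "\<alpha> * a + \<beta> * b = 1"
  proof -
    have "\<alpha> * a + \<beta> * b = s*a + t*b" unfolding \<alpha>_def \<beta>_def by (simp add: algebra_simps)
    thus ?thesis using st by simp
  qed
  have r0': "\<gamma> * a + \<delta> * b = 0" unfolding \<gamma>_def \<delta>_def by (simp add: algebra_simps)
  have r1: "\<alpha> * c + \<beta> * d = x"
  proof -
    have "\<alpha> * c + \<beta> * d = x0 - kk * (\<epsilon> * D)" unfolding \<alpha>_def \<beta>_def x0_def D_def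
      by (simp add: algebra_simps)
    thus ?thesis using epsD x0e by simp
  qed
  have r1': "\<gamma> * c + \<delta> * d = N"
  proof -
    have "\<gamma> * c + \<delta> * d = \<epsilon> * D" unfolding \<gamma>_def \<delta>_def D_def by (simp add: algebra_simps)
    thus ?thesis using epsD by simp
  qed
  have rel1: "w 0 * a + w 1 * c + w 2 * e = 0" using rel_w(1)[OF sp] ab cd ef by simp
  have rel2: "w 0 * b + w 1 * d + w 2 * f2 = 0" using rel_w(2)[OF sp] ab cd ef by simp
  have we: "w 2 * e = - w 0 * a - w 1 * c" using rel1 by linarith
  have wf: "w 2 * f2 = - w 0 * b - w 1 * d" using rel2 by linarith
  have r2: "w 2 * (\<alpha> * e + \<beta> * f2) = - (w 0 + x * w 1)"
  proof -
    have "w 2 * (\<alpha> * e + \<beta> * f2) = \<alpha> * (w 2 * e) + \<beta> * (w 2 * f2)" by (simp add: algebra_simps)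
    also have "\<dots> = \<alpha> * (- w 0 * a - w 1 * c) + \<beta> * (- w 0 * b - w 1 * d)"
      unfolding we wf by (rule refl)
    also have "\<dots> = - w 0 * (\<alpha> * a + \<beta> * b) - w 1 * (\<alpha> * c + \<beta> * d)" by (simp add: algebra_simps)
    also have "\<dots> = - (w 0 + x * w 1)" using r0 r1 by (simp add: algebra_simps)
    finally show ?thesis .
  qed
  have r2': "w 2 * (\<gamma> * e + \<delta> * f2) = w 2 * (- n * w 1)"
  proof -
    have "w 2 * (\<gamma> * e + \<delta> * f2) = \<gamma> * (w 2 * e) + \<delta> * (w 2 * f2)" by (simp add: algebra_simps)
    also have "\<dots> = \<gamma> * (- w 0 * a - w 1 * c) + \<delta> * (- w 0 * b - w 1 * d)"
      unfolding we wf by (rule refl)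
    also have "\<dots> = - w 0 * (\<gamma> * a + \<delta> * b) - w 1 * (\<gamma> * c + \<delta> * d)" by (simp add: algebra_simps)
    also have "\<dots> = w 2 * (- n * w 1)" using r0' r1' N_def by (simp add: algebra_simps)
    finally show ?thesis .
  qed
  have r2'': "\<gamma> * e + \<delta> * f2 = - n * w 1" using r2' w2 mult_left_cancel[of "w 2" "\<gamma> * e + \<delta> * f2" "- n * w 1"] by simp
  have dv: "w 2 dvd (w 0 + x * w 1)"
    using r2 by (metis dvd_minus_iff dvd_triv_left)
  have dq: "(w 0 + x * w 1) div w 2 = - (\<alpha> * e + \<beta> * f2)"
  proof -
    have "w 0 + x * w 1 = w 2 * (- (\<alpha> * e + \<beta> * f2))" using r2 by (simp only: mult_minus_right)
    thus ?thesis using w2 by simp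
  qed
  have xr: "0 \<le> x" "x < N" unfolding x_def using Npos by auto
  have gx: "gcd x N = 1"
  proof -
    have cc: "\<epsilon> * (\<delta> * x - \<beta> * N) = c"
    proof -
      have "\<delta> * x - \<beta> * N = (\<alpha> * \<delta> - \<beta> * \<gamma>) * c" unfolding r1[symmetric] r1'[symmetric]
        by (simp add: algebra_simps)
      hence "\<delta> * x - \<beta> * N = \<epsilon> * c" using det by simp
      hence "\<epsilon> * (\<delta> * x - \<beta> * N) = (\<epsilon> * \<epsilon>) * c" by (simp only: mult.assoc)
      thus ?thesis using ee by simp
    qed
    have dd: "\<epsilon> * (\<alpha> * N - \<gamma> * x) = d"
    proof -
      have "\<alpha> * N - \<gamma> * x = (\<alpha> * \<delta> - \<beta> * \<gamma>) * d" unfolding r1[symmetric] r1'[symmetric]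
        by (simp add: algebra_simps)
      hence "\<alpha> * N - \<gamma> * x = \<epsilon> * d" using det by simp
      hence "\<epsilon> * (\<alpha> * N - \<gamma> * x) = (\<epsilon> * \<epsilon>) * d" by (simp only: mult.assoc)
      thus ?thesis using ee by simp
    qed
    have "gcd x N dvd c" unfolding cc[symmetric] by simp
    moreover have "gcd x N dvd d" unfolding dd[symmetric] by simp
    ultimately have h: "gcd x N dvd gcd c d" by (rule gcd_greatest)
    have "gcd c d = 1" using g1 cd by simp
    hence "gcd x N dvd 1" using h by simp
    hence "\<bar>gcd x N\<bar> = 1" by (simp only: zdvd1_eq)
    thus ?thesis by simp
  qed
  have iso: "toric_iso P (normal_form_matrix n (w 0) (w 1) (w 2) x)"
    unfolding toric_iso_def
  proof (intro exI conjI)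
    show "\<alpha> * \<delta> - \<beta> * \<gamma> = 1 \<or> \<alpha> * \<delta> - \<beta> * \<gamma> = -1" by (rule detpm)
    show "bij_betw id {0..<3::nat} {0..<3}" by simp
    show "\<forall>i<3. lin2 (\<alpha>, \<beta>, \<gamma>, \<delta>) (P i) = normal_form_matrix n (w 0) (w 1) (w 2) x (id i)"
    proof (intro allI impI)
      fix i :: nat assume "i < 3"
      hence "i = 0 \<or> i = Suc 0 \<or> i = 2" by auto
      moreover have "lin2 (\<alpha>, \<beta>, \<gamma>, \<delta>) (P 0) = normal_form_matrix n (w 0) (w 1) (w 2) x (id 0)"
        unfolding ab lin2_def normal_form_matrix_def using r0 r0' by simp
      moreover have "lin2 (\<alpha>, \<beta>, \<gamma>, \<delta>) (P (Suc 0)) = normal_form_matrix n (w 0) (w 1) (w 2) x (id (Suc 0))"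
        unfolding cd lin2_def normal_form_matrix_def using r1 r1' N_def by simp
      moreover have "lin2 (\<alpha>, \<beta>, \<gamma>, \<delta>) (P 2) = normal_form_matrix n (w 0) (w 1) (w 2) x (id 2)"
        unfolding ef lin2_def normal_form_matrix_def using dq r2'' by simp
      ultimately show "lin2 (\<alpha>, \<beta>, \<gamma>, \<delta>) (P i) = normal_form_matrix n (w 0) (w 1) (w 2) x (id i)"
        by blast
    qed
  qed
  have "0 \<le> x \<and> x < n * w 2 \<and> gcd x (n * w 2) = 1 \<and> w 2 dvd (w 0 + x * w 1) \<and>
           toric_iso P (normal_form_matrix n (w 0) (w 1) (w 2) x)"
    using xr gx dv iso unfolding N_def by (intro conjI)
  thus ?thesis by (rule exI)
qed

end
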